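(* Let $\Phi_1,\Phi_2:M_n(\mathbb C)\to M_n(\mathbb C)$ be linear maps which are completely positive, trace-preserving and unital. Let $X,Y\in M_n(\mathbb C)$ satisfy $\Phi_1(X)=Y$ and $\Phi_2(Y)=X$. Then $\Phi_1(XW)=Y\Phi_1(W)$ and $\Phi_1(WX)=\Phi_1(W)Y$ for all $W\in M_n(\mathbb C)$. Furthermore, $X$ and $Y$ are cospectral, and $\Phi_1^*(Y)=X$.
   Context: $\Phi^*$ denotes the adjoint of $\Phi$ with respect to the trace inner product $\langle A,B\rangle=\mathrm{tr}(A^*B)$. Unital means $\Phi(I)=I$. *)

theory Defs
  imports "Jordan_Normal_Form.Schur_Decomposition"
begin

definition mat_trace :: "complex mat \<Rightarrow> complex" where
  "mat_trace A = (\<Sum>i<dim_row A. A $$ (i, i))"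

definition psd_mat :: "nat \<Rightarrow> complex mat \<Rightarrow> bool" where
  "psd_mat m A \<longleftrightarrow> A \<in> carrier_mat m m \<and>
     (\<forall>v \<in> carrier_vec m. conjugate v \<bullet> (A *\<^sub>v v) \<in> \<real> \<and> 0 \<le> Re (conjugate v \<bullet> (A *\<^sub>v v)))"

definition linear_map_mat :: "nat \<Rightarrow> (complex mat \<Rightarrow> complex mat) \<Rightarrow> bool" where
  "linear_map_mat n \<Phi> \<longleftrightarrow>
     (\<forall>A \<in> carrier_mat n n. \<Phi> A \<in> carrier_mat n n) \<and>
     (\<forall>A \<in> carrier_mat n n. \<forall>B \<in> carrier_mat n n. \<Phi> (A + B) = \<Phi> A + \<Phi> B) \<and>
     (\<forall>c. \<forall>A \<in> carrier_mat n n. \<Phi> (c \<cdot>\<^sub>m A) = c \<cdot>\<^sub>m \<Phi> A)"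

definition mat_block :: "nat \<Rightarrow> complex mat \<Rightarrow> nat \<Rightarrow> nat \<Rightarrow> complex mat" where
  "mat_block n A i j = mat n n (\<lambda>(a,b). A $$ (i*n + a, j*n + b))"

(* id_k \<otimes> \<Phi> acting blockwise on M_k(M_n) = M_{kn} *)
definition ampliation :: "nat \<Rightarrow> nat \<Rightarrow> (complex mat \<Rightarrow> complex mat) \<Rightarrow> complex mat \<Rightarrow> complex mat" where
  "ampliation k n \<Phi> A = mat (k*n) (k*n)
     (\<lambda>(r,c). \<Phi> (mat_block n A (r div n) (c div n)) $$ (r mod n, c mod n))"

definition completely_positive :: "nat \<Rightarrow> (complex mat \<Rightarrow> complex mat) \<Rightarrow> bool" where
  "completely_positive n \<Phi> \<longleftrightarrow>
     (\<forall>k \<ge> 1. \<forall>A. psd_mat (k*n) A \<longrightarrow> psd_mat (k*n) (ampliation k n \<Phi> A))"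

definition trace_preserving :: "nat \<Rightarrow> (complex mat \<Rightarrow> complex mat) \<Rightarrow> bool" where
  "trace_preserving n \<Phi> \<longleftrightarrow> (\<forall>A \<in> carrier_mat n n. mat_trace (\<Phi> A) = mat_trace A)"

definition unital :: "nat \<Rightarrow> (complex mat \<Rightarrow> complex mat) \<Rightarrow> bool" where
  "unital n \<Phi> \<longleftrightarrow> \<Phi> (1\<^sub>m n) = 1\<^sub>m n"

(* Adjoint of \<Phi> w.r.t. the trace inner product <A,B> = tr(A^* B), evaluated at B *)
definition hs_adjoint :: "nat \<Rightarrow> (complex mat \<Rightarrow> complex mat) \<Rightarrow> complex mat \<Rightarrow> complex mat" where
  "hs_adjoint n \<Phi> B = (THE C. C \<in> carrier_mat n n \<and>
      (\<forall>A \<in> carrier_mat n n. mat_trace (mat_adjoint C * A) = mat_trace (mat_adjoint B * \<Phi> A)))"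

(* cospectral: same eigenvalues with multiplicities *)
definition cospectral :: "complex mat \<Rightarrow> complex mat \<Rightarrow> bool" where
  "cospectral X Y \<longleftrightarrow> char_poly X = char_poly Y"

end

theory Submission
  imports Defs
begin


lemma adj_carrier[simp]: "A \<in> carrier_mat n m \<Longrightarrow> mat_adjoint A \<in> carrier_mat m n"
  unfolding mat_adjoint_def by (auto simp: mat_of_rows_def)

lemma adj_dims[simp]: "dim_row (mat_adjoint A) = dim_col A" "dim_col (mat_adjoint A) = dim_row A"
  unfolding mat_adjoint_def by (auto simp: mat_of_rows_def)

lemma adj_index[simp]: "i < dim_col A \<Longrightarrow> j < dim_row A \<Longrightarrow> mat_adjoint A $$ (i,j) = cnj (A $$ (j,i))"
  unfolding mat_adjoint_def by (auto simp: mat_of_rows_def)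

lemma adj_adj[simp]: "mat_adjoint (mat_adjoint A) = (A::complex mat)"
proof (rule eq_matI)
  fix i j assume "i < dim_row A" "j < dim_col A"
  then show "mat_adjoint (mat_adjoint A) $$ (i, j) = A $$ (i, j)"
    by (subst adj_index) auto
qed auto

lemma adj_one[simp]: "mat_adjoint (1\<^sub>m n :: complex mat) = 1\<^sub>m n"
  by (rule eq_matI, auto)

lemma adj_mult: fixes A B :: "complex mat"
  assumes "A \<in> carrier_mat n m" "B \<in> carrier_mat m k"
  shows "mat_adjoint (A * B) = mat_adjoint B * mat_adjoint A"
  using assms by (intro eq_matI) (auto simp: scalar_prod_def sum_conjugate ac_simps)



definition bf :: "nat \<Rightarrow> complex mat \<Rightarrow> (nat \<Rightarrow> complex) \<Rightarrow> (nat \<Rightarrow> complex) \<Rightarrow> complex" where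
  "bf m P f g = (\<Sum>i<m. cnj (f i) * (\<Sum>j<m. P $$ (i,j) * g j))"

lemma bf_alt: "bf m P f g = (\<Sum>i<m. \<Sum>j<m. cnj (f i) * P $$ (i,j) * g j)"
  unfolding bf_def by (simp add: sum_distrib_left ac_simps)

lemma bf_add_left: "bf m P (\<lambda>l. f l + g l) h = bf m P f h + bf m P g h"
  unfolding bf_def by (simp add: ring_distribs sum.distrib)
lemma bf_add_right: "bf m P h (\<lambda>l. f l + g l) = bf m P h f + bf m P h g"
  unfolding bf_def by (simp add: ring_distribs sum.distrib)
lemma bf_smult_left: "bf m P (\<lambda>l. c * f l) h = cnj c * bf m P f h"
  unfolding bf_def by (simp add: sum_distrib_left ac_simps)
lemma bf_smult_right: "bf m P h (\<lambda>l. c * f l) = c * bf m P h f"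
  unfolding bf_def by (simp add: sum_distrib_left ac_simps)
lemma bf_delta: assumes "i < m" "j < m" shows "bf m P (\<lambda>l. if l = i then 1 else 0) (\<lambda>l. if l = j then 1 else 0) = P $$ (i,j)"
proof -
  have "(\<Sum>ja<m. P $$ (l,ja) * (if ja = j then 1 else 0)) = P $$ (l,j)" for l
    using \<open>j < m\<close> by (subst sum.cong[OF refl, of _ _ "\<lambda>ja. if ja = j then P $$ (l,ja) else 0"]) auto
  moreover have "(\<Sum>l<m. cnj (if l = i then 1 else 0) * P $$ (l,j)) = P $$ (i,j)"
    using \<open>i < m\<close> by (subst sum.cong[OF refl, of _ _ "\<lambda>l. if l = i then P $$ (l,j) else 0"]) auto
  ultimately show ?thesis unfolding bf_def by simp
qed

lemma qform_sum: "P \<in> carrier_mat m m \<Longrightarrow> v \<in> carrier_vec m \<Longrightarrow>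
   conjugate v \<bullet> (P *\<^sub>v v) = bf m P (\<lambda>i. v $ i) (\<lambda>i. v $ i)"
  unfolding bf_def scalar_prod_def mult_mat_vec_def row_def
  by (auto simp: lessThan_atLeast0 intro!: sum.cong)

lemma psdD: assumes "psd_mat m P" shows "bf m P f f \<in> \<real>" "0 \<le> Re (bf m P f f)"
proof -
  have P: "P \<in> carrier_mat m m" using assms unfolding psd_mat_def by auto
  have "conjugate (vec m f) \<bullet> (P *\<^sub>v vec m f) \<in> \<real> \<and> 0 \<le> Re (conjugate (vec m f) \<bullet> (P *\<^sub>v vec m f))"
    using assms unfolding psd_mat_def by auto
  moreover have "conjugate (vec m f) \<bullet> (P *\<^sub>v vec m f) = bf m P f f"
    unfolding qform_sum[OF P vec_carrier] bf_def by (auto intro!: sum.cong)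
  ultimately show "bf m P f f \<in> \<real>" "0 \<le> Re (bf m P f f)" by auto
qed

lemma psd_herm: assumes "psd_mat m P" "i < m" "j < m"
  shows "P $$ (i,j) = cnj (P $$ (j,i))"
proof -
  define di where "di = (\<lambda>l::nat. if l = i then (1::complex) else 0)"
  define dj where "dj = (\<lambda>l::nat. if l = j then (1::complex) else 0)"
  have e: "bf m P (\<lambda>l. a * di l + b * dj l) (\<lambda>l. a * di l + b * dj l) =
     cnj a * a * P$$(i,i) + cnj a * b * P$$(i,j) + cnj b * a * P$$(j,i) + cnj b * b * P$$(j,j)" for a b
    unfolding bf_add_left bf_add_right bf_smult_left bf_smult_right di_def dj_def
      bf_delta[OF assms(2,2)] bf_delta[OF assms(2,3)] bf_delta[OF assms(3,2)] bf_delta[OF assms(3,3)]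
    by (simp add: algebra_simps)
  have ii: "P$$(i,i) \<in> \<real>" using psdD(1)[OF assms(1), of di] e[of 1 0] by simp
  have jj: "P$$(j,j) \<in> \<real>" using psdD(1)[OF assms(1), of dj] e[of 0 1] by (simp add: dj_def)
  have 1: "P$$(i,i) + P$$(i,j) + P$$(j,i) + P$$(j,j) \<in> \<real>" using psdD(1)[OF assms(1), of "\<lambda>l. 1 * di l + 1 * dj l"] e[of 1 1] by simp
  have 2: "P$$(i,i) + \<i> * P$$(i,j) - \<i> * P$$(j,i) + P$$(j,j) \<in> \<real>" using psdD(1)[OF assms(1), of "\<lambda>l. 1 * di l + \<i> * dj l"] e[of 1 \<i>] by simp
  from ii jj 1 2 show ?thesis
    by (auto simp: complex_eq_iff complex_is_Real_iff)
qed



lemma bf_herm: assumes "psd_mat m P" shows "bf m P f g = cnj (bf m P g f)"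
proof -
  have "cnj (bf m P g f) = (\<Sum>i<m. \<Sum>j<m. g i * cnj (P $$ (i,j)) * cnj (f j))"
    unfolding bf_alt by (simp add: cnj_sum)
  also have "\<dots> = (\<Sum>j<m. \<Sum>i<m. g i * cnj (P $$ (i,j)) * cnj (f j))" by (rule sum.swap)
  also have "\<dots> = bf m P f g" unfolding bf_alt
    by (intro sum.cong refl, subst psd_herm[OF assms], auto simp: ac_simps)
  finally show ?thesis by simp
qed

lemma quad_nonneg_zero: fixes a b :: real
  assumes "\<And>t. 0 \<le> 2 * t * a + t * t * b" "0 \<le> b" shows "a = 0"
proof -
  define u where "u = a/(b+1)"
  have uc: "a = u * (b+1)" using assms(2) unfolding u_def by simp
  have "0 \<le> 2 * (-u) * a + (-u) * (-u) * b" by (rule assms(1))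
  also have "\<dots> = - (u*u) * (b + 2)" unfolding uc by (simp add: algebra_simps)
  finally have "u * u * (b+2) \<le> 0" by simp
  moreover have "0 \<le> u * u" by simp
  ultimately have "u * u = 0" using assms(2)
    by (metis add_nonneg_pos mult_le_0_iff not_le order_antisym zero_less_numeral)
  thus ?thesis using uc by simp
qed

lemma psd_zero: assumes psd: "psd_mat m P" and z: "bf m P f f = 0" and i: "i < m"
  shows "(\<Sum>j<m. P$$(i,j) * f j) = 0"
proof -
  define g where "g = (\<lambda>i. \<Sum>j<m. P$$(i,j) * f j)"
  have N: "bf m P g f = (\<Sum>i<m. cnj (g i) * g i)" unfolding bf_def g_def by simp
  have ReN: "Re (bf m P g f) = (\<Sum>i<m. (cmod (g i))^2)" unfolding N Re_sum
    by (intro sum.cong refl) (metis Re_complex_of_real complex_norm_square mult.commute)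
  have fg: "bf m P f g = cnj (bf m P g f)" by (rule bf_herm[OF psd])
  have "0 \<le> 2 * t * Re (bf m P g f) + t * t * Re (bf m P g g)" for t
  proof -
    have "0 \<le> Re (bf m P (\<lambda>l. f l + of_real t * g l) (\<lambda>l. f l + of_real t * g l))"
      by (rule psdD(2)[OF psd])
    also have "bf m P (\<lambda>l. f l + of_real t * g l) (\<lambda>l. f l + of_real t * g l) =
       bf m P f f + of_real t * bf m P f g + of_real t * bf m P g f + of_real t * of_real t * bf m P g g"
      unfolding bf_add_left bf_add_right bf_smult_left bf_smult_right by (simp add: algebra_simps)
    finally show ?thesis unfolding z fg by (simp add: algebra_simps)
  qed
  from quad_nonneg_zero[OF this psdD(2)[OF psd]] have "(\<Sum>i<m. (cmod (g i))^2) = 0" using ReN by simp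
  hence "(cmod (g i))^2 = 0" using i by (subst (asm) sum_nonneg_eq_0_iff) auto
  thus ?thesis unfolding g_def by simp
qed



lemma sum_lessThan_add: "(\<Sum>c<a+(b::nat). F c) = (\<Sum>c<a. F c) + (\<Sum>c<b. F (a+c))"
  by (induction b) (auto simp: add.assoc)

lemma sum_blocks: "(\<Sum>c<k*(n::nat). F c) = (\<Sum>j<k. \<Sum>b<n. F (j*n+b))"
proof (induction k)
  case (Suc k)
  have "(\<Sum>c<Suc k*n. F c) = (\<Sum>c<k*n + n. F c)" by (simp add: add.commute)
  also have "\<dots> = (\<Sum>c<k*n. F c) + (\<Sum>b<n. F (k*n+b))" by (rule sum_lessThan_add)
  finally show ?case using Suc by simp
qed simp

lemma gram_general_psd: fixes a :: "nat \<Rightarrow> nat \<Rightarrow> complex"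
  shows "psd_mat m (mat m m (\<lambda>(r,c). \<Sum>l<p. cnj (a l r) * a l c))"
  unfolding psd_mat_def
proof (intro conjI ballI)
  fix v :: "complex vec" assume v: "v \<in> carrier_vec m"
  define G where "G = mat m m (\<lambda>(r,c). \<Sum>l<p. cnj (a l r) * a l c)"
  define h where "h = (\<lambda>l. \<Sum>c<m. a l c * v $ c)"
  have "conjugate v \<bullet> (G *\<^sub>v v) = bf m G (\<lambda>i. v $ i) (\<lambda>i. v $ i)"
    by (rule qform_sum[OF _ v], simp add: G_def)
  also have "\<dots> = (\<Sum>r<m. \<Sum>c<m. \<Sum>l<p. cnj (v $ r) * (cnj (a l r) * a l c) * v $ c)"
    unfolding bf_alt G_def by (simp add: sum_distrib_left sum_distrib_right)
  also have "\<dots> = (\<Sum>r<m. \<Sum>l<p. \<Sum>c<m. cnj (v $ r) * (cnj (a l r) * a l c) * v $ c)"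
    by (intro sum.cong refl sum.swap)
  also have "\<dots> = (\<Sum>l<p. \<Sum>r<m. \<Sum>c<m. cnj (v $ r) * (cnj (a l r) * a l c) * v $ c)"
    by (rule sum.swap)
  also have "\<dots> = (\<Sum>l<p. cnj (h l) * h l)"
    unfolding h_def by (simp add: cnj_sum sum_product ac_simps) (rule sum.cong[OF refl], rule sum.swap)
  also have "\<dots> = (\<Sum>l<p. of_real ((cmod (h l))^2))"
    by (intro sum.cong refl) (metis complex_norm_square mult.commute)
  finally have e: "conjugate v \<bullet> (G *\<^sub>v v) = of_real (\<Sum>l<p. (cmod (h l))^2)" by simp
  show "conjugate v \<bullet> (G *\<^sub>v v) \<in> \<real>" unfolding e by simp
  show "0 \<le> Re (conjugate v \<bullet> (G *\<^sub>v v))" unfolding e by (simp add: sum_nonneg)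
qed simp

lemma adj_mult_index: fixes A B :: "complex mat"
  assumes "A \<in> carrier_mat n n" "B \<in> carrier_mat n n" "i < n" "j < n"
  shows "(mat_adjoint A * B) $$ (i,j) = (\<Sum>l<n. cnj (A $$ (l,i)) * B $$ (l,j))"
  using assms by (simp add: scalar_prod_def lessThan_atLeast0)

lemma gram_psd: assumes A: "\<And>i. i<k \<Longrightarrow> A i \<in> carrier_mat n n"
 shows "psd_mat (k*n) (mat (k*n) (k*n) (\<lambda>(r,c). (mat_adjoint (A (r div n)) * A (c div n)) $$ (r mod n, c mod n)))"
proof -
  have "mat (k*n) (k*n) (\<lambda>(r,c). (mat_adjoint (A (r div n)) * A (c div n)) $$ (r mod n, c mod n))
    = mat (k*n) (k*n) (\<lambda>(r,c). \<Sum>l<n. cnj (A (r div n) $$ (l, r mod n)) * A (c div n) $$ (l, c mod n))"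
  proof (rule eq_matI)
    fix r c assume rc: "r < dim_row (mat (k*n) (k*n) (\<lambda>(r,c). \<Sum>l<n. cnj (A (r div n) $$ (l, r mod n)) * A (c div n) $$ (l, c mod n)))"
      "c < dim_col (mat (k*n) (k*n) (\<lambda>(r,c). \<Sum>l<n. cnj (A (r div n) $$ (l, r mod n)) * A (c div n) $$ (l, c mod n)))"
    hence r: "r < k*n" and c: "c < k*n" by auto
    hence n: "n > 0" by (cases n) auto
    have "r div n < k" "c div n < k" using r c by (auto simp: less_mult_imp_div_less)
    with A have "A (r div n) \<in> carrier_mat n n" "A (c div n) \<in> carrier_mat n n" by auto
    with r c n adj_mult_index[of "A (r div n)" n "A (c div n)" "r mod n" "c mod n"] show "mat (k*n) (k*n) (\<lambda>(r,c). (mat_adjoint (A (r div n)) * A (c div n)) $$ (r mod n, c mod n)) $$ (r,c) = 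
      mat (k*n) (k*n) (\<lambda>(r,c). \<Sum>l<n. cnj (A (r div n) $$ (l, r mod n)) * A (c div n) $$ (l, c mod n)) $$ (r,c)"
      by simp
  qed auto
  thus ?thesis using gram_general_psd[where m="k*n" and p=n and a="\<lambda>l r. A (r div n) $$ (l, r mod n)"] by simp
qed



definition ip :: "nat \<Rightarrow> (nat \<Rightarrow> complex) \<Rightarrow> (nat \<Rightarrow> complex) \<Rightarrow> complex" where
  "ip n f h = (\<Sum>a<n. cnj (f a) * h a)"
definition mv :: "nat \<Rightarrow> complex mat \<Rightarrow> (nat \<Rightarrow> complex) \<Rightarrow> (nat \<Rightarrow> complex)" where
  "mv n P g = (\<lambda>a. \<Sum>b<n. P $$ (a,b) * g b)"

lemma idx_bound: assumes "i < k" "a < (n::nat)" shows "i*n+a < k*n"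
proof -
  have "Suc i * n \<le> k * n" using assms(1) by (intro mult_le_mono1) simp
  thus ?thesis using assms(2) by simp
qed

lemma bf_ip: "bf n P f g = ip n f (mv n P g)"
  unfolding bf_def ip_def mv_def by simp

lemma blocks_row:
  fixes Q :: "nat \<Rightarrow> nat \<Rightarrow> complex mat"
  assumes i: "i < k" and a: "a < n"
  shows "(\<Sum>c<k*n. mat (k*n) (k*n) (\<lambda>(r,c). Q (r div n) (c div n) $$ (r mod n, c mod n)) $$ (i*n+a, c)
           * f (c div n) (c mod n)) = (\<Sum>j<k. mv n (Q i j) (f j) a)"
proof -
  have ia: "i*n+a < k*n" using i a by (rule idx_bound)
  have n: "n > 0" using a by simp
  have "(\<Sum>c<k*n. mat (k*n) (k*n) (\<lambda>(r,c). Q (r div n) (c div n) $$ (r mod n, c mod n)) $$ (i*n+a, c)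
           * f (c div n) (c mod n)) = (\<Sum>j<k. \<Sum>b<n. mat (k*n) (k*n) (\<lambda>(r,c). Q (r div n) (c div n) $$ (r mod n, c mod n)) $$ (i*n+a, j*n+b)
           * f ((j*n+b) div n) ((j*n+b) mod n))" by (rule sum_blocks)
  also have "\<dots> = (\<Sum>j<k. \<Sum>b<n. Q i j $$ (a, b) * f j b)"
  proof (intro sum.cong refl)
    fix j b assume "j \<in> {..<k}" "b \<in> {..<n}"
    hence jb: "j*n+b < k*n" by (intro idx_bound) auto
    show "mat (k*n) (k*n) (\<lambda>(r,c). Q (r div n) (c div n) $$ (r mod n, c mod n)) $$ (i*n+a, j*n+b)
           * f ((j*n+b) div n) ((j*n+b) mod n) = Q i j $$ (a, b) * f j b"
      using ia jb a \<open>b \<in> {..<n}\<close> by simp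
  qed
  finally show ?thesis unfolding mv_def by simp
qed

lemma blocks_bf:
  fixes Q :: "nat \<Rightarrow> nat \<Rightarrow> complex mat"
  shows "bf (k*n) (mat (k*n) (k*n) (\<lambda>(r,c). Q (r div n) (c div n) $$ (r mod n, c mod n)))
     (\<lambda>r. f (r div n) (r mod n)) (\<lambda>r. g (r div n) (r mod n)) = (\<Sum>i<k. \<Sum>j<k. ip n (f i) (mv n (Q i j) (g j)))"
proof -
  let ?M = "mat (k*n) (k*n) (\<lambda>(r,c). Q (r div n) (c div n) $$ (r mod n, c mod n))"
  have "bf (k*n) ?M (\<lambda>r. f (r div n) (r mod n)) (\<lambda>r. g (r div n) (r mod n)) =
     (\<Sum>i<k. \<Sum>a<n. cnj (f ((i*n+a) div n) ((i*n+a) mod n)) * (\<Sum>c<k*n. ?M $$ (i*n+a, c) * g (c div n) (c mod n)))"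
    unfolding bf_def by (rule sum_blocks)
  also have "\<dots> = (\<Sum>i<k. \<Sum>a<n. cnj (f i a) * (\<Sum>j<k. mv n (Q i j) (g j) a))"
    by (intro sum.cong refl, subst blocks_row, auto)
  also have "\<dots> = (\<Sum>i<k. \<Sum>j<k. ip n (f i) (mv n (Q i j) (g j)))"
    unfolding ip_def by (simp add: sum_distrib_left) (rule sum.cong[OF refl], rule sum.swap)
  finally show ?thesis .
qed

lemma cp_block_psd:
  assumes cp: "completely_positive n \<Phi>" and k: "k \<ge> 1" and A: "\<And>i. i < k \<Longrightarrow> A i \<in> carrier_mat n n"
  shows "psd_mat (k*n) (mat (k*n) (k*n) (\<lambda>(r,c). \<Phi> (mat_adjoint (A (r div n)) * A (c div n)) $$ (r mod n, c mod n)))"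
proof -
  let ?G = "mat (k*n) (k*n) (\<lambda>(r,c). (mat_adjoint (A (r div n)) * A (c div n)) $$ (r mod n, c mod n))"
  have G: "psd_mat (k*n) ?G" by (rule gram_psd[OF A])
  have blk: "mat_block n ?G i j = mat_adjoint (A i) * A j" if "i < k" "j < k" for i j
  proof (rule eq_matI)
    fix a b assume ab: "a < dim_row (mat_adjoint (A i) * A j)" "b < dim_col (mat_adjoint (A i) * A j)"
    hence a: "a < n" and b: "b < n" using A that by auto
    have "i*n+a < k*n" "j*n+b < k*n" using that a b by (auto intro: idx_bound)
    thus "mat_block n ?G i j $$ (a,b) = (mat_adjoint (A i) * A j) $$ (a,b)"
      unfolding mat_block_def using a b by simp
  qed (insert A that, auto simp: mat_block_def)
  have eq: "ampliation k n \<Phi> ?G = mat (k*n) (k*n) (\<lambda>(r,c). \<Phi> (mat_adjoint (A (r div n)) * A (c div n)) $$ (r mod n, c mod n))"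
    unfolding ampliation_def
  proof (intro eq_matI)
    fix r c assume "r < dim_row (mat (k*n) (k*n) (\<lambda>(r,c). \<Phi> (mat_adjoint (A (r div n)) * A (c div n)) $$ (r mod n, c mod n)))"
      "c < dim_col (mat (k*n) (k*n) (\<lambda>(r,c). \<Phi> (mat_adjoint (A (r div n)) * A (c div n)) $$ (r mod n, c mod n)))"
    hence r: "r < k*n" and c: "c < k*n" by auto
    have "r div n < k" "c div n < k" using r c by (auto simp: less_mult_imp_div_less)
    thus "mat (k*n) (k*n) (\<lambda>(r,c). \<Phi> (mat_block n ?G (r div n) (c div n)) $$ (r mod n, c mod n)) $$ (r,c) =
      mat (k*n) (k*n) (\<lambda>(r,c). \<Phi> (mat_adjoint (A (r div n)) * A (c div n)) $$ (r mod n, c mod n)) $$ (r,c)"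
      using r c blk by simp
  qed auto
  have "psd_mat (k*n) (ampliation k n \<Phi> ?G)" using cp k G unfolding completely_positive_def by blast
  thus ?thesis unfolding eq .
qed



lemma mv_one: "a < n \<Longrightarrow> mv n (1\<^sub>m n) g a = g a"
  unfolding mv_def by (subst sum.cong[OF refl, of _ _ "\<lambda>b. if b = a then g b else 0"]) auto

lemma mv_mult: assumes "A \<in> carrier_mat n n" "B \<in> carrier_mat n n" "a < n"
  shows "mv n (A * B) g a = mv n A (mv n B g) a"
proof -
  have "mv n (A * B) g a = (\<Sum>b<n. \<Sum>l<n. A $$ (a,l) * B $$ (l,b) * g b)"
    unfolding mv_def using assms by (simp add: scalar_prod_def lessThan_atLeast0 sum_distrib_right)
  also have "\<dots> = (\<Sum>l<n. \<Sum>b<n. A $$ (a,l) * B $$ (l,b) * g b)" by (rule sum.swap)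
  also have "\<dots> = mv n A (mv n B g) a" unfolding mv_def by (simp add: sum_distrib_left ac_simps)
  finally show ?thesis .
qed

lemma mv_minus: assumes "A \<in> carrier_mat n n" "B \<in> carrier_mat n n" "a < n"
  shows "mv n (A - B) g a = mv n A g a - mv n B g a"
  unfolding mv_def using assms by (simp add: sum_subtractf left_diff_distrib)

lemma ip_cong: "(\<And>a. a < n \<Longrightarrow> h a = h' a) \<Longrightarrow> ip n f h = ip n f h'"
  unfolding ip_def by (intro sum.cong refl) auto

lemma ip_adj: assumes "B \<in> carrier_mat n n"
  shows "ip n f (mv n (mat_adjoint B) h) = ip n (mv n B f) h"
proof -
  have "ip n f (mv n (mat_adjoint B) h) = (\<Sum>a<n. \<Sum>b<n. cnj (f a) * cnj (B $$ (b,a)) * h b)"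
    unfolding ip_def mv_def using assms by (simp add: sum_distrib_left ac_simps)
  also have "\<dots> = (\<Sum>b<n. \<Sum>a<n. cnj (f a) * cnj (B $$ (b,a)) * h b)" by (rule sum.swap)
  also have "\<dots> = ip n (mv n B f) h"
    unfolding ip_def mv_def by (simp add: cnj_sum sum_distrib_left sum_distrib_right ac_simps)
  finally show ?thesis .
qed

lemma ip_neg_left: "ip n (\<lambda>a. - f a) h = - ip n f h" unfolding ip_def by (simp add: sum_negf)
lemma ip_neg_right: "ip n f (\<lambda>a. - h a) = - ip n f h" unfolding ip_def by (simp add: sum_negf)
lemma mv_neg: "mv n P (\<lambda>b. - g b) = (\<lambda>a. - mv n P g a)" unfolding mv_def by (simp add: sum_negf)
lemma mv_zero: "mv n P (\<lambda>b. 0) = (\<lambda>a. 0)" unfolding mv_def by simp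
lemma ip_zero: "ip n (\<lambda>a. 0) h = 0" unfolding ip_def by simp
lemma mv_delta: "a < n \<Longrightarrow> b < n \<Longrightarrow> mv n P (\<lambda>l. if l = b then 1 else 0) a = P $$ (a,b)"
  unfolding mv_def by (subst sum.cong[OF refl, of _ _ "\<lambda>l. if l = b then P $$ (a,l) else 0"]) auto

lemma linD: assumes "linear_map_mat n \<Phi>" "A \<in> carrier_mat n n" shows "\<Phi> A \<in> carrier_mat n n"
  using assms unfolding linear_map_mat_def by auto

lemma herm_pres: assumes lin: "linear_map_mat n \<Phi>" and cp: "completely_positive n \<Phi>"
  and W: "W \<in> carrier_mat n n"
  shows "\<Phi> (mat_adjoint W) = mat_adjoint (\<Phi> W)"
proof -
  define A where "A = (\<lambda>i::nat. if i = 0 then 1\<^sub>m n else W)"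
  have A: "\<And>i. i < 2 \<Longrightarrow> A i \<in> carrier_mat n n" unfolding A_def using W by auto
  have psd: "psd_mat (2*n) (mat (2*n) (2*n) (\<lambda>(r,c). \<Phi> (mat_adjoint (A (r div n)) * A (c div n)) $$ (r mod n, c mod n)))"
    by (rule cp_block_psd[OF cp _ A]) auto
  have PW: "\<Phi> W \<in> carrier_mat n n" "\<Phi> (mat_adjoint W) \<in> carrier_mat n n" using linD[OF lin] W by auto
  show ?thesis
  proof (rule eq_matI)
    fix b a assume "b < dim_row (mat_adjoint (\<Phi> W))" "a < dim_col (mat_adjoint (\<Phi> W))"
    hence b: "b < n" and a: "a < n" using PW by auto
    have "a < 2*n" "n + b < 2*n" using a b by auto
    from psd_herm[OF psd this]
    have "\<Phi> (mat_adjoint (A 0) * A 1) $$ (a, b) = cnj (\<Phi> (mat_adjoint (A 1) * A 0) $$ (b, a))"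
      using a b by simp
    hence "\<Phi> W $$ (a,b) = cnj (\<Phi> (mat_adjoint W) $$ (b,a))" unfolding A_def using W by simp
    thus "\<Phi> (mat_adjoint W) $$ (b, a) = mat_adjoint (\<Phi> W) $$ (b, a)" using a b PW by simp
  qed (insert PW, auto)
qed



lemma sum2: "(\<Sum>i<(2::nat). T i) = T 0 + T 1" by (simp add: numeral_2_eq_2)
lemma sum3: "(\<Sum>i<(3::nat). T i) = T 0 + T 1 + T 2" by (simp add: eval_nat_numeral)

lemma ks_core:
  assumes lin: "linear_map_mat n \<Phi>" and cp: "completely_positive n \<Phi>" and un: "unital n \<Phi>"
  and Z: "Z \<in> carrier_mat n n"
  and A0: "A 0 = 1\<^sub>m n" and A1: "A 1 = Z"
  and f0: "f 0 = (\<lambda>a. - mv n (\<Phi> Z) g a)" and f1: "f 1 = g"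
  shows "ip n (f 0) (mv n (\<Phi> (mat_adjoint (A 0) * A 0)) (f 0)) + ip n (f 0) (mv n (\<Phi> (mat_adjoint (A 0) * A 1)) (f 1))
    + ip n (f 1) (mv n (\<Phi> (mat_adjoint (A 1) * A 0)) (f 0)) + ip n (f 1) (mv n (\<Phi> (mat_adjoint (A 1) * A 1)) (f 1))
    = ip n g (mv n (\<Phi> (mat_adjoint Z * Z)) g) - ip n (mv n (\<Phi> Z) g) (mv n (\<Phi> Z) g)"
proof -
  let ?u = "mv n (\<Phi> Z) g"
  have PZ: "\<Phi> Z \<in> carrier_mat n n" using linD[OF lin Z] .
  have q00: "\<Phi> (mat_adjoint (A 0) * A 0) = 1\<^sub>m n" using un unfolding A0 unital_def by simp
  have q01: "\<Phi> (mat_adjoint (A 0) * A 1) = \<Phi> Z" unfolding A0 A1 using Z by simp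
  have q10: "\<Phi> (mat_adjoint (A 1) * A 0) = mat_adjoint (\<Phi> Z)" unfolding A0 A1 using Z
    by (simp add: herm_pres[OF lin cp Z])
  have t00: "ip n (f 0) (mv n (1\<^sub>m n) (f 0)) = ip n ?u ?u"
    by (subst ip_cong[of n _ "f 0"], simp add: mv_one) (simp add: f0 ip_neg_left ip_neg_right)
  have t01: "ip n (f 0) (mv n (\<Phi> Z) (f 1)) = - ip n ?u ?u"
    by (simp add: f0 f1 ip_neg_left)
  have t10: "ip n (f 1) (mv n (mat_adjoint (\<Phi> Z)) (f 0)) = - ip n ?u ?u"
    by (simp add: f0 f1 ip_adj[OF PZ] mv_neg ip_neg_right)
  show ?thesis unfolding q00 q01 q10 t00 t01 t10 unfolding A1 f1 by simp
qed

lemma ks_rhs: assumes lin: "linear_map_mat n \<Phi>" and Z: "Z \<in> carrier_mat n n"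
  shows "bf n (\<Phi> (mat_adjoint Z * Z) - mat_adjoint (\<Phi> Z) * \<Phi> Z) g g =
    ip n g (mv n (\<Phi> (mat_adjoint Z * Z)) g) - ip n (mv n (\<Phi> Z) g) (mv n (\<Phi> Z) g)"
proof -
  have PZ: "\<Phi> Z \<in> carrier_mat n n" using linD[OF lin Z] .
  have S: "\<Phi> (mat_adjoint Z * Z) \<in> carrier_mat n n" by (intro linD[OF lin] mult_carrier_mat[OF adj_carrier[OF Z] Z])
  have "bf n (\<Phi> (mat_adjoint Z * Z) - mat_adjoint (\<Phi> Z) * \<Phi> Z) g g =
    ip n g (\<lambda>a. mv n (\<Phi> (mat_adjoint Z * Z)) g a - mv n (mat_adjoint (\<Phi> Z)) (mv n (\<Phi> Z) g) a)"
    unfolding bf_ip using PZ S by (intro ip_cong) (simp add: mv_minus[OF S mult_carrier_mat[OF adj_carrier[OF PZ] PZ]] mv_mult[OF adj_carrier[OF PZ] PZ])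
  also have "\<dots> = ip n g (mv n (\<Phi> (mat_adjoint Z * Z)) g) - ip n g (mv n (mat_adjoint (\<Phi> Z)) (mv n (\<Phi> Z) g))"
    unfolding ip_def by (simp add: right_diff_distrib sum_subtractf)
  finally show ?thesis unfolding ip_adj[OF PZ] .
qed

lemma ks:
  assumes lin: "linear_map_mat n \<Phi>" and cp: "completely_positive n \<Phi>" and un: "unital n \<Phi>"
  and Z: "Z \<in> carrier_mat n n"
  shows "psd_mat n (\<Phi> (mat_adjoint Z * Z) - mat_adjoint (\<Phi> Z) * \<Phi> Z)"
proof -
  have PZ: "\<Phi> Z \<in> carrier_mat n n" using linD[OF lin Z] .
  have S: "\<Phi> (mat_adjoint Z * Z) \<in> carrier_mat n n" by (intro linD[OF lin] mult_carrier_mat[OF adj_carrier[OF Z] Z])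
  define A where "A = (\<lambda>i::nat. if i = 0 then 1\<^sub>m n else Z)"
  have A: "\<And>i. i < 2 \<Longrightarrow> A i \<in> carrier_mat n n" unfolding A_def using Z by auto
  have psd: "psd_mat (2*n) (mat (2*n) (2*n) (\<lambda>(r,c). \<Phi> (mat_adjoint (A (r div n)) * A (c div n)) $$ (r mod n, c mod n)))"
    by (rule cp_block_psd[OF cp _ A]) auto
  show ?thesis unfolding psd_mat_def
  proof (intro conjI ballI)
    fix v :: "complex vec" assume v: "v \<in> carrier_vec n"
    define g where "g = (\<lambda>i. v $ i)"
    define f where "f = (\<lambda>i::nat. if i = 0 then (\<lambda>a. - mv n (\<Phi> Z) g a) else g)"
    have A0: "A 0 = 1\<^sub>m n" and A1: "A 1 = Z" and f0: "f 0 = (\<lambda>a. - mv n (\<Phi> Z) g a)" and f1: "f 1 = g"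
      unfolding A_def f_def by auto
    have "conjugate v \<bullet> ((\<Phi> (mat_adjoint Z * Z) - mat_adjoint (\<Phi> Z) * \<Phi> Z) *\<^sub>v v) =
      bf n (\<Phi> (mat_adjoint Z * Z) - mat_adjoint (\<Phi> Z) * \<Phi> Z) g g"
      unfolding g_def by (rule qform_sum[OF _ v]) (insert PZ S, auto)
    also have "\<dots> = bf (2*n) (mat (2*n) (2*n) (\<lambda>(r,c). \<Phi> (mat_adjoint (A (r div n)) * A (c div n)) $$ (r mod n, c mod n)))
       (\<lambda>r. f (r div n) (r mod n)) (\<lambda>r. f (r div n) (r mod n))"
      unfolding blocks_bf[where Q="\<lambda>i j. \<Phi> (mat_adjoint (A i) * A j)"] sum2 ks_rhs[OF lin Z]
      by (simp only: ks_core[OF lin cp un Z A0 A1 f0 f1, symmetric] add.assoc)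
    finally have e: "conjugate v \<bullet> ((\<Phi> (mat_adjoint Z * Z) - mat_adjoint (\<Phi> Z) * \<Phi> Z) *\<^sub>v v) = bf (2*n) (mat (2*n) (2*n) (\<lambda>(r,c). \<Phi> (mat_adjoint (A (r div n)) * A (c div n)) $$ (r mod n, c mod n)))
       (\<lambda>r. f (r div n) (r mod n)) (\<lambda>r. f (r div n) (r mod n))" .
    show "conjugate v \<bullet> ((\<Phi> (mat_adjoint Z * Z) - mat_adjoint (\<Phi> Z) * \<Phi> Z) *\<^sub>v v) \<in> \<real>"
      unfolding e by (rule psdD(1)[OF psd])
    show "0 \<le> Re (conjugate v \<bullet> ((\<Phi> (mat_adjoint Z * Z) - mat_adjoint (\<Phi> Z) * \<Phi> Z) *\<^sub>v v))"
      unfolding e by (rule psdD(2)[OF psd])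
  qed (insert PZ S, auto)
qed



lemma ip_zero_right: "ip n f (\<lambda>a. 0) = 0" unfolding ip_def by simp

lemma md:
  assumes lin: "linear_map_mat n \<Phi>" and cp: "completely_positive n \<Phi>" and un: "unital n \<Phi>"
  and Z: "Z \<in> carrier_mat n n" and eqZ: "\<Phi> (mat_adjoint Z * Z) = mat_adjoint (\<Phi> Z) * \<Phi> Z"
  and W: "W \<in> carrier_mat n n"
  shows "\<Phi> (W * Z) = \<Phi> W * \<Phi> Z"
proof -
  have PZ: "\<Phi> Z \<in> carrier_mat n n" using linD[OF lin Z] .
  have PW: "\<Phi> W \<in> carrier_mat n n" using linD[OF lin W] .
  have PWZ: "\<Phi> (W * Z) \<in> carrier_mat n n" using linD[OF lin mult_carrier_mat[OF W Z]] .
  define A where "A = (\<lambda>i::nat. if i = 0 then 1\<^sub>m n else if i = 1 then Z else mat_adjoint W)"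
  have A: "\<And>i. i < 3 \<Longrightarrow> A i \<in> carrier_mat n n" unfolding A_def using Z W by auto
  let ?M = "mat (3*n) (3*n) (\<lambda>(r,c). \<Phi> (mat_adjoint (A (r div n)) * A (c div n)) $$ (r mod n, c mod n))"
  have psd: "psd_mat (3*n) ?M"
    by (rule cp_block_psd[OF cp _ A]) auto
  have key: "mv n (\<Phi> (W * Z)) g a = mv n (\<Phi> W) (mv n (\<Phi> Z) g) a" if a: "a < n" for g a
  proof -
    define f where "f = (\<lambda>i::nat. if i = 0 then (\<lambda>a. - mv n (\<Phi> Z) g a) else if i = 1 then g else (\<lambda>a. 0))"
    have A0: "A 0 = 1\<^sub>m n" and A1: "A 1 = Z" and A2: "A 2 = mat_adjoint W"
      and f0: "f 0 = (\<lambda>a. - mv n (\<Phi> Z) g a)" and f1: "f 1 = g" and f2: "f 2 = (\<lambda>a. 0)"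
      unfolding A_def f_def by auto
    have "ip n g (mv n (\<Phi> (mat_adjoint Z * Z)) g) = ip n g (mv n (mat_adjoint (\<Phi> Z)) (mv n (\<Phi> Z) g))"
      unfolding eqZ by (rule ip_cong) (simp add: mv_mult[OF adj_carrier[OF PZ] PZ])
    hence zero: "ip n g (mv n (\<Phi> (mat_adjoint Z * Z)) g) - ip n (mv n (\<Phi> Z) g) (mv n (\<Phi> Z) g) = 0"
      unfolding ip_adj[OF PZ] by simp
    have "bf (3*n) ?M (\<lambda>r. f (r div n) (r mod n)) (\<lambda>r. f (r div n) (r mod n)) = 0"
      unfolding blocks_bf[where Q="\<lambda>i j. \<Phi> (mat_adjoint (A i) * A j)"] sum3
      unfolding f2 mv_zero ip_zero ip_zero_right
      using ks_core[OF lin cp un Z A0 A1 f0 f1] zero by (simp add: ac_simps)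
    from psd_zero[OF psd this, of "2*n+a"] a
    have "(\<Sum>c<3*n. ?M $$ (2*n+a, c) * f (c div n) (c mod n)) = 0" by simp
    hence "(\<Sum>j<3. mv n (\<Phi> (mat_adjoint (A 2) * A j)) (f j) a) = 0"
      by (subst (asm) blocks_row) (use a in auto)
    hence "mv n (\<Phi> (mat_adjoint (A 2) * A 0)) (f 0) a + mv n (\<Phi> (mat_adjoint (A 2) * A 1)) (f 1) a = 0"
      unfolding sum3 f2 mv_zero by simp
    moreover have "\<Phi> (mat_adjoint (A 2) * A 0) = \<Phi> W" unfolding A2 A0 using W by simp
    moreover have "\<Phi> (mat_adjoint (A 2) * A 1) = \<Phi> (W * Z)" unfolding A2 A1 by simp
    ultimately show ?thesis unfolding f0 f1 mv_neg by (simp add: algebra_simps)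
  qed
  show ?thesis
  proof (rule eq_matI)
    fix a b assume "a < dim_row (\<Phi> W * \<Phi> Z)" "b < dim_col (\<Phi> W * \<Phi> Z)"
    hence a: "a < n" and b: "b < n" using PW PZ by auto
    have "\<Phi> (W * Z) $$ (a,b) = mv n (\<Phi> (W * Z)) (\<lambda>l. if l = b then 1 else 0) a" using a b by (simp add: mv_delta)
    also have "\<dots> = mv n (\<Phi> W) (mv n (\<Phi> Z) (\<lambda>l. if l = b then 1 else 0)) a" by (rule key[OF a])
    also have "\<dots> = mv n (\<Phi> W * \<Phi> Z) (\<lambda>l. if l = b then 1 else 0) a" using a by (simp add: mv_mult[OF PW PZ])
    also have "\<dots> = (\<Phi> W * \<Phi> Z) $$ (a,b)" using a b by (rule mv_delta)
    finally show "\<Phi> (W * Z) $$ (a,b) = (\<Phi> W * \<Phi> Z) $$ (a,b)" .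
  qed (insert PW PZ PWZ, auto)
qed



lemma psd_carrier: "psd_mat n P \<Longrightarrow> P \<in> carrier_mat n n" unfolding psd_mat_def by auto

lemma psd_diag: assumes "psd_mat n P" "i < n" shows "P$$(i,i) \<in> \<real>" "0 \<le> Re (P$$(i,i))"
  using psdD[OF assms(1), of "\<lambda>l. if l = i then 1 else 0"] bf_delta[OF assms(2,2), of P] by auto

lemma psd_trace_nonneg: assumes "psd_mat n P" shows "0 \<le> Re (mat_trace P)"
  using psd_carrier[OF assms] psd_diag(2)[OF assms] unfolding mat_trace_def Re_sum
  by (auto intro: sum_nonneg)

lemma psd_trace_zero: assumes psd: "psd_mat n P" and tr: "Re (mat_trace P) \<le> 0"
  and l: "l < n" and i: "i < n" shows "P $$ (l,i) = 0"
proof -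
  have P: "P \<in> carrier_mat n n" by (rule psd_carrier[OF psd])
  have "(\<Sum>j<n. Re (P$$(j,j))) = 0" using tr psd_trace_nonneg[OF psd] P
    unfolding mat_trace_def Re_sum by simp
  hence "Re (P$$(i,i)) = 0" using psd_diag(2)[OF psd] i by (subst (asm) sum_nonneg_eq_0_iff) auto
  hence "P$$(i,i) = 0" using psd_diag(1)[OF psd i] by (simp add: complex_eq_iff complex_is_Real_iff)
  hence "bf n P (\<lambda>l. if l = i then 1 else 0) (\<lambda>l. if l = i then 1 else 0) = 0" using bf_delta[OF i i] by simp
  from psd_zero[OF psd this l] show ?thesis
    by (subst (asm) sum.cong[OF refl, of _ _ "\<lambda>j. if j = i then P $$ (l,j) else 0"]) (use i in auto)
qed

lemma trace_minus: assumes "A \<in> carrier_mat n n" "B \<in> carrier_mat n n"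
  shows "mat_trace (A - B) = mat_trace A - mat_trace B"
  using assms unfolding mat_trace_def by (simp add: sum_subtractf)

lemma tr_eq:
  assumes lin1: "linear_map_mat n \<Phi>1" and cp1: "completely_positive n \<Phi>1"
      and tp1: "trace_preserving n \<Phi>1" and un1: "unital n \<Phi>1"
      and lin2: "linear_map_mat n \<Phi>2" and cp2: "completely_positive n \<Phi>2"
      and tp2: "trace_preserving n \<Phi>2" and un2: "unital n \<Phi>2"
      and Z: "Z \<in> carrier_mat n n" and Z': "Z' \<in> carrier_mat n n"
      and e1: "\<Phi>1 Z = Z'" and e2: "\<Phi>2 Z' = Z"
  shows "\<Phi>1 (mat_adjoint Z * Z) = mat_adjoint Z' * Z'"
proof -
  have C1: "mat_adjoint Z * Z \<in> carrier_mat n n" by (rule mult_carrier_mat[OF adj_carrier[OF Z] Z])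
  have C2: "mat_adjoint Z' * Z' \<in> carrier_mat n n" by (rule mult_carrier_mat[OF adj_carrier[OF Z'] Z'])
  have P1: "\<Phi>1 (mat_adjoint Z * Z) \<in> carrier_mat n n" using linD[OF lin1 C1] .
  have P2: "\<Phi>2 (mat_adjoint Z' * Z') \<in> carrier_mat n n" using linD[OF lin2 C2] .
  have D1: "psd_mat n (\<Phi>1 (mat_adjoint Z * Z) - mat_adjoint Z' * Z')" using ks[OF lin1 cp1 un1 Z] e1 by simp
  have D2: "psd_mat n (\<Phi>2 (mat_adjoint Z' * Z') - mat_adjoint Z * Z)" using ks[OF lin2 cp2 un2 Z'] e2 by simp
  have t1: "mat_trace (\<Phi>1 (mat_adjoint Z * Z)) = mat_trace (mat_adjoint Z * Z)" using tp1 C1 unfolding trace_preserving_def by auto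
  have t2: "mat_trace (\<Phi>2 (mat_adjoint Z' * Z')) = mat_trace (mat_adjoint Z' * Z')" using tp2 C2 unfolding trace_preserving_def by auto
  have "Re (mat_trace (\<Phi>1 (mat_adjoint Z * Z) - mat_adjoint Z' * Z')) = - Re (mat_trace (\<Phi>2 (mat_adjoint Z' * Z') - mat_adjoint Z * Z))"
    unfolding trace_minus[OF P1 C2] trace_minus[OF P2 C1] t1 t2 by simp
  hence tr: "Re (mat_trace (\<Phi>1 (mat_adjoint Z * Z) - mat_adjoint Z' * Z')) \<le> 0" using psd_trace_nonneg[OF D2] by simp
  show ?thesis
  proof (rule eq_matI)
    fix i j assume "i < dim_row (mat_adjoint Z' * Z')" "j < dim_col (mat_adjoint Z' * Z')"
    hence i: "i < n" and j: "j < n" using Z' by auto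
    have "(\<Phi>1 (mat_adjoint Z * Z) - mat_adjoint Z' * Z') $$ (i,j) = \<Phi>1 (mat_adjoint Z * Z) $$ (i,j) - (mat_adjoint Z' * Z') $$ (i,j)"
      using C2 i j by (intro index_minus_mat) auto
    with psd_trace_zero[OF D1 tr i j] show "\<Phi>1 (mat_adjoint Z * Z) $$ (i,j) = (mat_adjoint Z' * Z') $$ (i,j)"
      by simp
  qed (insert P1 C2, auto)
qed



lemma sum_mset_count: fixes f :: "'a \<Rightarrow> complex"
  assumes "finite S" "set_mset A \<subseteq> S"
  shows "(\<Sum>a\<in>#A. f a) = (\<Sum>x\<in>S. of_nat (count A x) * f x)"
  using assms(2)
proof (induction A)
  case empty thus ?case by simp
next
  case (add a A)
  hence a: "a \<in> S" and IH: "(\<Sum>a\<in>#A. f a) = (\<Sum>x\<in>S. of_nat (count A x) * f x)" by auto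
  have "(\<Sum>x\<in>S. of_nat (count (add_mset a A) x) * f x) = (\<Sum>x\<in>S. of_nat (count A x) * f x + (if x = a then f x else 0))"
    by (intro sum.cong refl) (auto simp: algebra_simps)
  also have "\<dots> = (\<Sum>x\<in>S. of_nat (count A x) * f x) + f a" using a assms(1) by (simp add: sum.distrib)
  finally show ?case using IH by simp
qed

lemma mset_eq_powsum: fixes A B :: "complex multiset"
  assumes h: "\<And>k. (\<Sum>a\<in>#A. a^k) = (\<Sum>b\<in>#B. b^k)" shows "A = B"
proof -
  define S where "S = set_mset A \<union> set_mset B"
  have S: "finite S" unfolding S_def by simp
  define d where "d x = (of_nat (count A x) - of_nat (count B x) :: complex)" for x
  have 1: "(\<Sum>x\<in>S. d x * x^k) = 0" for k
    using h[of k] sum_mset_count[OF S, of A "\<lambda>a. a^k"] sum_mset_count[OF S, of B "\<lambda>a. a^k"]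
    unfolding d_def S_def by (simp add: left_diff_distrib sum_subtractf)
  have 2: "(\<Sum>x\<in>S. d x * poly q x) = 0" for q
  proof -
    have "(\<Sum>x\<in>S. d x * poly q x) = (\<Sum>x\<in>S. \<Sum>i\<le>degree q. coeff q i * (d x * x^i))"
      unfolding poly_altdef by (simp add: sum_distrib_left ac_simps)
    also have "\<dots> = (\<Sum>i\<le>degree q. coeff q i * (\<Sum>x\<in>S. d x * x^i))"
      by (subst sum.swap) (simp add: sum_distrib_left)
    finally show ?thesis using 1 by simp
  qed
  have dc: "d c = 0" if c: "c \<in> S" for c
  proof -
    define q where "q = (\<Prod>y\<in>S - {c}. [:-y, 1:])"
    have pq: "poly q x = (\<Prod>y\<in>S - {c}. x - y)" for x unfolding q_def poly_prod by simp
    have "(\<Sum>x\<in>S. d x * poly q x) = d c * poly q c + (\<Sum>x\<in>S - {c}. d x * poly q x)"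
      using S c by (simp add: sum.remove)
    also have "(\<Sum>x\<in>S - {c}. d x * poly q x) = 0"
      unfolding pq using S by (intro sum.neutral ballI) (auto simp: prod_zero_iff)
    finally have "d c * poly q c = 0" using 2[of q] by simp
    moreover have "poly q c \<noteq> 0" unfolding pq using S by (simp add: prod_zero_iff)
    ultimately show ?thesis by simp
  qed
  show ?thesis
  proof (rule multiset_eqI)
    fix x show "count A x = count B x"
    proof (cases "x \<in> S")
      case True thus ?thesis using dc[OF True] unfolding d_def by simp
    next
      case False thus ?thesis unfolding S_def by (simp add: not_in_iff)
    qed
  qed
qed



lemma trace_comm: fixes A B :: "complex mat"
  assumes "A \<in> carrier_mat n n" "B \<in> carrier_mat n n"
  shows "mat_trace (A * B) = mat_trace (B * A)"
proof -
  have "mat_trace (A * B) = (\<Sum>i<n. \<Sum>l<n. A $$ (i,l) * B $$ (l,i))"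
    unfolding mat_trace_def using assms by (simp add: scalar_prod_def lessThan_atLeast0)
  also have "\<dots> = (\<Sum>l<n. \<Sum>i<n. A $$ (i,l) * B $$ (l,i))" by (rule sum.swap)
  also have "\<dots> = mat_trace (B * A)"
    unfolding mat_trace_def using assms by (simp add: scalar_prod_def lessThan_atLeast0 ac_simps)
  finally show ?thesis .
qed

lemma trace_sim: fixes A B :: "complex mat"
  assumes "similar_mat_wit A B P Q" "A \<in> carrier_mat n n"
  shows "mat_trace A = mat_trace B"
proof -
  from similar_mat_witD2[OF assms(2,1)] have
    PQ: "Q * P = 1\<^sub>m n" and AB: "A = P * B * Q" and C: "B \<in> carrier_mat n n" "P \<in> carrier_mat n n" "Q \<in> carrier_mat n n"
    by auto
  have "mat_trace A = mat_trace (Q * (P * B))" unfolding AB using C by (intro trace_comm) auto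
  also have "Q * (P * B) = (Q * P) * B" using C by (simp add: assoc_mult_mat)
  finally show ?thesis unfolding PQ using C by simp
qed

lemma ut_mult: fixes U V :: "complex mat"
  assumes U: "U \<in> carrier_mat n n" and V: "V \<in> carrier_mat n n"
  and uU: "upper_triangular U" and uV: "upper_triangular V"
  shows "upper_triangular (U * V)" "\<And>i. i < n \<Longrightarrow> (U * V) $$ (i,i) = U $$ (i,i) * V $$ (i,i)"
proof -
  have zU: "U $$ (i,l) = 0" if "i < n" "l < i" for i l using uU that U by (auto simp: upper_triangular_def)
  have zV: "V $$ (l,j) = 0" if "l < n" "j < l" for l j using uV that V by (auto simp: upper_triangular_def)
  have e: "(U * V) $$ (i,j) = (\<Sum>l<n. U $$ (i,l) * V $$ (l,j))" if "i < n" "j < n" for i j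
    using U V that by (simp add: scalar_prod_def lessThan_atLeast0)
  show "upper_triangular (U * V)" unfolding upper_triangular_def
  proof (intro allI impI)
    fix i j assume i: "i < dim_row (U * V)" and j: "j < i"
    hence i': "i < n" using U by simp
    show "(U * V) $$ (i,j) = 0" unfolding e[OF i' order.strict_trans[OF j i']]
      by (rule sum.neutral) (use zU zV i' j in \<open>metis lessThan_iff linorder_not_le mult_eq_0_iff order.strict_trans1\<close>)
  qed
  fix i assume i: "i < n"
  show "(U * V) $$ (i,i) = U $$ (i,i) * V $$ (i,i)" unfolding e[OF i i]
    by (subst sum.cong[OF refl, of _ _ "\<lambda>l. if l = i then U $$ (i,i) * V $$ (i,i) else 0"])
       (use zU zV i in \<open>auto simp: linorder_neq_iff\<close>)
qed

lemma ut_pow: fixes B :: "complex mat"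
  assumes B: "B \<in> carrier_mat n n" and u: "upper_triangular B"
  shows "upper_triangular (B ^\<^sub>m k) \<and> (\<forall>i<n. (B ^\<^sub>m k) $$ (i,i) = B $$ (i,i) ^ k)"
proof (induction k)
  case 0 thus ?case using B by auto
next
  case (Suc k)
  have C: "B ^\<^sub>m k \<in> carrier_mat n n" using B by simp
  from ut_mult[OF C B] Suc u show ?case by simp
qed

lemma trace_pow_eig: fixes X :: "complex mat"
  assumes X: "X \<in> carrier_mat n n"
  shows "\<exists>ds. char_poly X = (\<Prod>a\<leftarrow>ds. [:-a, 1:]) \<and> (\<forall>k. mat_trace (X ^\<^sub>m k) = (\<Sum>a\<in>#mset ds. a^k))"
proof -
  obtain es where es: "char_poly X = (\<Prod>a\<leftarrow>es. [:- a, 1:])" using char_poly_factorized[OF X] by blast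
  define B where "B = schur_upper_triangular X es"
  have B: "B \<in> carrier_mat n n" and u: "upper_triangular B" and s: "similar_mat X B"
    using schur_upper_triangular[OF X es] unfolding B_def by auto
  have cp: "char_poly X = (\<Prod>a\<leftarrow>diag_mat B. [:- a, 1:])"
    using char_poly_similar[OF s] char_poly_upper_triangular[OF B u] by simp
  obtain P Q where w: "similar_mat_wit X B P Q" using s unfolding similar_mat_def by auto
  have "mat_trace (X ^\<^sub>m k) = (\<Sum>a\<in>#mset (diag_mat B). a^k)" for k
  proof -
    have "mat_trace (X ^\<^sub>m k) = mat_trace (B ^\<^sub>m k)"
      using trace_sim[OF similar_mat_wit_pow[OF w], of k n] X by simp
    also have "\<dots> = (\<Sum>i<n. B $$ (i,i) ^ k)" unfolding mat_trace_def using ut_pow[OF B u, of k] B by simp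
    also have "\<dots> = (\<Sum>a\<in>#mset (diag_mat B). a^k)" unfolding diag_mat_def using B
      by (simp add: lessThan_atLeast0 sum_unfold_sum_mset multiset.map_comp o_def)
    finally show ?thesis .
  qed
  with cp show ?thesis by blast
qed

lemma cospec_of_traces: fixes X Y :: "complex mat"
  assumes X: "X \<in> carrier_mat n n" and Y: "Y \<in> carrier_mat n n"
  and tr: "\<And>k. mat_trace (X ^\<^sub>m k) = mat_trace (Y ^\<^sub>m k)"
  shows "char_poly X = char_poly Y"
proof -
  obtain ds where d: "char_poly X = (\<Prod>a\<leftarrow>ds. [:-a, 1:])" "\<And>k. mat_trace (X ^\<^sub>m k) = (\<Sum>a\<in>#mset ds. a^k)"
    using trace_pow_eig[OF X] by blast
  obtain es where e: "char_poly Y = (\<Prod>a\<leftarrow>es. [:-a, 1:])" "\<And>k. mat_trace (Y ^\<^sub>m k) = (\<Sum>a\<in>#mset es. a^k)"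
    using trace_pow_eig[OF Y] by blast
  have "mset ds = mset es" by (rule mset_eq_powsum) (use d(2) e(2) tr in metis)
  hence "(\<Prod>a\<leftarrow>ds. [:-a, 1:]) = (\<Prod>a\<leftarrow>es. [:-a, 1:])"
    by (metis mset_map prod_mset_prod_list)
  thus ?thesis using d e by simp
qed



lemma tr_unit: fixes C :: "complex mat"
  assumes C: "C \<in> carrier_mat n n" and i: "i < n" and j: "j < n"
  shows "mat_trace (mat_adjoint C * mat n n (\<lambda>(a,b). if a = i \<and> b = j then 1 else 0)) = cnj (C $$ (i,j))"
proof -
  have "mat_trace (mat_adjoint C * mat n n (\<lambda>(a,b). if a = i \<and> b = j then 1 else 0))
     = (\<Sum>l<n. \<Sum>m<n. cnj (C $$ (m,l)) * (if m = i \<and> l = j then 1 else 0))"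
    unfolding mat_trace_def using C by (simp add: scalar_prod_def lessThan_atLeast0)
  also have "\<dots> = (\<Sum>l<n. if l = j then cnj (C $$ (i,l)) else 0)"
  proof (intro sum.cong refl)
    fix l assume "l \<in> {..<n}"
    show "(\<Sum>m<n. cnj (C $$ (m,l)) * (if m = i \<and> l = j then 1 else 0)) = (if l = j then cnj (C $$ (i,l)) else 0)"
      by (subst sum.cong[OF refl, of _ _ "\<lambda>m. if m = i then (if l = j then cnj (C $$ (m,l)) else 0) else 0"]) (use i in auto)
  qed
  also have "\<dots> = cnj (C $$ (i,j))" using j by simp
  finally show ?thesis .
qed

theorem lemmaA2:
  fixes n :: nat and \<Phi>1 \<Phi>2 :: "complex mat \<Rightarrow> complex mat" and X Y :: "complex mat"
  assumes lin1: "linear_map_mat n \<Phi>1" and cp1: "completely_positive n \<Phi>1"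
      and tp1: "trace_preserving n \<Phi>1" and un1: "unital n \<Phi>1"
      and lin2: "linear_map_mat n \<Phi>2" and cp2: "completely_positive n \<Phi>2"
      and tp2: "trace_preserving n \<Phi>2" and un2: "unital n \<Phi>2"
      and X: "X \<in> carrier_mat n n" and Y: "Y \<in> carrier_mat n n"
      and XY: "\<Phi>1 X = Y" and YX: "\<Phi>2 Y = X"
  shows "(\<forall>W \<in> carrier_mat n n. \<Phi>1 (X * W) = Y * \<Phi>1 W \<and> \<Phi>1 (W * X) = \<Phi>1 W * Y)
         \<and> cospectral X Y \<and> hs_adjoint n \<Phi>1 Y = X"
proof -
  have aX: "mat_adjoint X \<in> carrier_mat n n" and aY: "mat_adjoint Y \<in> carrier_mat n n" using X Y by auto
  have H1: "\<And>W. W \<in> carrier_mat n n \<Longrightarrow> \<Phi>1 (mat_adjoint W) = mat_adjoint (\<Phi>1 W)"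
    by (rule herm_pres[OF lin1 cp1])
  have H2: "\<And>W. W \<in> carrier_mat n n \<Longrightarrow> \<Phi>2 (mat_adjoint W) = mat_adjoint (\<Phi>2 W)"
    by (rule herm_pres[OF lin2 cp2])
  have aXY: "\<Phi>1 (mat_adjoint X) = mat_adjoint Y" using H1[OF X] XY by simp
  have aYX: "\<Phi>2 (mat_adjoint Y) = mat_adjoint X" using H2[OF Y] YX by simp
  have E1: "\<Phi>1 (mat_adjoint X * X) = mat_adjoint (\<Phi>1 X) * \<Phi>1 X"
    using tr_eq[OF lin1 cp1 tp1 un1 lin2 cp2 tp2 un2 X Y XY YX] XY by simp
  have E2: "\<Phi>1 (mat_adjoint (mat_adjoint X) * mat_adjoint X) = mat_adjoint (\<Phi>1 (mat_adjoint X)) * \<Phi>1 (mat_adjoint X)"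
    using tr_eq[OF lin1 cp1 tp1 un1 lin2 cp2 tp2 un2 aX aY aXY aYX] aXY by simp
  have R1: "\<Phi>1 (W * X) = \<Phi>1 W * Y" if W: "W \<in> carrier_mat n n" for W
    using md[OF lin1 cp1 un1 X E1 W] XY by simp
  have R2: "\<Phi>1 (W * mat_adjoint X) = \<Phi>1 W * mat_adjoint Y" if W: "W \<in> carrier_mat n n" for W
    using md[OF lin1 cp1 un1 aX E2 W] aXY by simp
  have L1: "\<Phi>1 (X * W) = Y * \<Phi>1 W" if W: "W \<in> carrier_mat n n" for W
  proof -
    have aW: "mat_adjoint W \<in> carrier_mat n n" using W by simp
    have PW: "\<Phi>1 W \<in> carrier_mat n n" using linD[OF lin1 W] .
    have V: "mat_adjoint W * mat_adjoint X \<in> carrier_mat n n" using aW aX by simp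
    have "X * W = mat_adjoint (mat_adjoint W * mat_adjoint X)"
      using adj_mult[OF aW aX] by simp
    hence "\<Phi>1 (X * W) = mat_adjoint (\<Phi>1 (mat_adjoint W * mat_adjoint X))" using H1[OF V] by simp
    also have "\<dots> = mat_adjoint (mat_adjoint (\<Phi>1 W) * mat_adjoint Y)" using R2[OF aW] H1[OF W] by simp
    also have "\<dots> = Y * \<Phi>1 W" using adj_mult[of "mat_adjoint (\<Phi>1 W)" n n "mat_adjoint Y" n] PW Y by simp
    finally show ?thesis .
  qed
  have pow: "\<Phi>1 (X ^\<^sub>m k) = Y ^\<^sub>m k" for k
  proof (induction k)
    case 0 thus ?case using un1 X Y unfolding unital_def by simp
  next
    case (Suc k)
    have "X ^\<^sub>m k \<in> carrier_mat n n" using X by simp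
    from R1[OF this] Suc show ?case by simp
  qed
  have cos: "cospectral X Y" unfolding cospectral_def
  proof (rule cospec_of_traces[OF X Y])
    fix k
    have "X ^\<^sub>m k \<in> carrier_mat n n" using X by simp
    hence "mat_trace (\<Phi>1 (X ^\<^sub>m k)) = mat_trace (X ^\<^sub>m k)" using tp1 unfolding trace_preserving_def by blast
    thus "mat_trace (X ^\<^sub>m k) = mat_trace (Y ^\<^sub>m k)" using pow by simp
  qed
  have propX: "mat_trace (mat_adjoint X * A) = mat_trace (mat_adjoint Y * \<Phi>1 A)" if A: "A \<in> carrier_mat n n" for A
  proof -
    have aA: "mat_adjoint A \<in> carrier_mat n n" using A by simp
    have PA: "\<Phi>1 A \<in> carrier_mat n n" using linD[OF lin1 A] .
    have V: "mat_adjoint A * X \<in> carrier_mat n n" using aA X by simp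
    have C: "mat_adjoint X * A \<in> carrier_mat n n" using aX A by simp
    have "mat_adjoint X * A = mat_adjoint (mat_adjoint A * X)" using adj_mult[OF aA X] by simp
    hence "\<Phi>1 (mat_adjoint X * A) = mat_adjoint (\<Phi>1 (mat_adjoint A * X))" using H1[OF V] by simp
    also have "\<dots> = mat_adjoint (mat_adjoint (\<Phi>1 A) * Y)" using R1[OF aA] H1[OF A] by simp
    also have "\<dots> = mat_adjoint Y * \<Phi>1 A" using adj_mult[of "mat_adjoint (\<Phi>1 A)" n n Y n] PA Y by simp
    finally have "\<Phi>1 (mat_adjoint X * A) = mat_adjoint Y * \<Phi>1 A" .
    moreover have "mat_trace (\<Phi>1 (mat_adjoint X * A)) = mat_trace (mat_adjoint X * A)"
      using tp1 C unfolding trace_preserving_def by blast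
    ultimately show ?thesis by simp
  qed
  have hs: "hs_adjoint n \<Phi>1 Y = X" unfolding hs_adjoint_def
  proof (rule the_equality)
    show "X \<in> carrier_mat n n \<and> (\<forall>A\<in>carrier_mat n n. mat_trace (mat_adjoint X * A) = mat_trace (mat_adjoint Y * \<Phi>1 A))"
      using X propX by blast
  next
    fix C assume "C \<in> carrier_mat n n \<and> (\<forall>A\<in>carrier_mat n n. mat_trace (mat_adjoint C * A) = mat_trace (mat_adjoint Y * \<Phi>1 A))"
    hence C: "C \<in> carrier_mat n n" and pC: "\<And>A. A \<in> carrier_mat n n \<Longrightarrow> mat_trace (mat_adjoint C * A) = mat_trace (mat_adjoint Y * \<Phi>1 A)" by auto
    show "C = X"
    proof (rule eq_matI)
      fix i j assume "i < dim_row X" "j < dim_col X"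
      hence i: "i < n" and j: "j < n" using X by auto
      let ?E = "mat n n (\<lambda>(a,b). if a = i \<and> b = j then 1 else 0) :: complex mat"
      have "cnj (C $$ (i,j)) = cnj (X $$ (i,j))"
        using tr_unit[OF C i j] tr_unit[OF X i j] pC[of ?E] propX[of ?E] by simp
      thus "C $$ (i,j) = X $$ (i,j)" by simp
    qed (use C X in auto)
  qed
  show ?thesis using L1 R1 cos hs by blast
qed


end
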